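(* Let $\log_{Ab}(x)=x+\sum_{i\ge1}m_ix^{i+1}$, $m_i\in\mathbb{Q}[a_1,a_2]$, be the logarithm of the universal Abel formal group law. Then for every $n\ge2$, $$m_{n-1}=\frac1n\prod_{j=1}^{n-1}\left(\frac{n-2j}{\sqrt{j(n-j)}}\sqrt{2a_2}-a_1\right),$$ where the right-hand side (in which the factors for $j$ and $n-j$ combine to $a_1^2-\frac{2(n-2j)^2}{j(n-j)}a_2$, and the factor for $j=n/2$ equals $-a_1$) is a polynomial in $a_1,a_2$.
   Context: The universal Abel formal group law is the formal group law over $\mathbb{Q}[a_1,a_2]$ ($a_1,a_2$ free parameters) of the form $\mathcal{F}_{Ab}(x,y)=xR(y)+yR(x)$ with $R(x)=1+\frac{a_1}{2}x+a_2x^2+a_3x^3+\cdots$, where the coefficients $a_n\in\mathbb{Q}[a_1,a_2]$, $n\ge3$, are uniquely determined by associativity (e.g. $a_3=-\frac23a_1a_2$, $a_4=\frac12a_1^2a_2-\frac12a_2^2$). Its logarithm is $\log_{Ab}(x)=\int_0^x\frac{dt}{1+a_1t+a_2t^2+a_3t^3+\cdots}$; e.g. $m_1=-\frac12a_1$, $m_2=\frac13(a_1^2-a_2)$. *)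

theory Defs
  imports "HOL-Analysis.Analysis" "HOL-Computational_Algebra.Formal_Power_Series"
begin

text \<open>Formal power series in three variables x, y, z, represented by their
coefficient functions: s i j l is the coefficient of x^i y^j z^l.\<close>

type_synonym 'a ser3 = "nat \<Rightarrow> nat \<Rightarrow> nat \<Rightarrow> 'a"

definition add3 :: "'a::comm_ring_1 ser3 \<Rightarrow> 'a ser3 \<Rightarrow> 'a ser3" where
  "add3 f g = (\<lambda>i j l. f i j l + g i j l)"

definition mul3 :: "'a::comm_ring_1 ser3 \<Rightarrow> 'a ser3 \<Rightarrow> 'a ser3" where
  "mul3 f g = (\<lambda>i j l. \<Sum>p\<le>i. \<Sum>q\<le>j. \<Sum>r\<le>l. f p q r * g (i - p) (j - q) (l - r))"

definition one3 :: "'a::comm_ring_1 ser3" where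
  "one3 = (\<lambda>i j l. if i = 0 \<and> j = 0 \<and> l = 0 then 1 else 0)"

primrec pow3 :: "'a::comm_ring_1 ser3 \<Rightarrow> nat \<Rightarrow> 'a ser3" where
  "pow3 f 0 = one3"
| "pow3 f (Suc k) = mul3 f (pow3 f k)"

definition X3 :: "'a::comm_ring_1 ser3" where
  "X3 = (\<lambda>i j l. if i = 1 \<and> j = 0 \<and> l = 0 then 1 else 0)"
definition Y3 :: "'a::comm_ring_1 ser3" where
  "Y3 = (\<lambda>i j l. if i = 0 \<and> j = 1 \<and> l = 0 then 1 else 0)"
definition Z3 :: "'a::comm_ring_1 ser3" where
  "Z3 = (\<lambda>i j l. if i = 0 \<and> j = 0 \<and> l = 1 then 1 else 0)"

text \<open>Substitution of a series G (with zero constant term) into a one-variable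
power series with coefficients r: (r o G) = sum_k r_k G^k; only k <= i+j+l
contributes to the coefficient of x^i y^j z^l.\<close>
definition subst3 :: "(nat \<Rightarrow> 'a::comm_ring_1) \<Rightarrow> 'a ser3 \<Rightarrow> 'a ser3" where
  "subst3 r G = (\<lambda>i j l. \<Sum>k\<le>i+j+l. r k * pow3 G k i j l)"

definition abelR :: "(nat \<Rightarrow> 'a::field_char_0) \<Rightarrow> nat \<Rightarrow> 'a" where
  "abelR a n = (if n = 0 then 1 else if n = 1 then a 1 / 2 else a n)"

definition abelF :: "(nat \<Rightarrow> 'a::field_char_0) \<Rightarrow> 'a ser3 \<Rightarrow> 'a ser3 \<Rightarrow> 'a ser3" where
  "abelF a G H = add3 (mul3 G (subst3 (abelR a) H)) (mul3 H (subst3 (abelR a) G))"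

definition abel_assoc :: "(nat \<Rightarrow> 'a::field_char_0) \<Rightarrow> bool" where
  "abel_assoc a \<longleftrightarrow> abelF a (abelF a X3 Y3) Z3 = abelF a X3 (abelF a Y3 Z3)"

definition abel_log :: "(nat \<Rightarrow> 'a::field_char_0) \<Rightarrow> 'a fps" where
  "abel_log a = fps_integral (inverse (Abs_fps (\<lambda>n. if n = 0 then 1 else a n))) 0"

end

theory Submission
  imports Defs
begin
definition T3 :: "nat \<Rightarrow> nat \<Rightarrow> 'a::comm_ring_1 ser3 \<Rightarrow> 'a fps" where
  "T3 i l s = Abs_fps (\<lambda>j. s i j l)"

lemma T3_nth[simp]: "fps_nth (T3 i l s) j = s i j l" by (simp add: T3_def)

lemma T3_mul: "T3 i l (mul3 f g) = (\<Sum>p\<le>i. \<Sum>r\<le>l. T3 p r f * T3 (i-p) (l-r) g)"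
proof (rule fps_ext)
  fix j
  have "fps_nth (T3 i l (mul3 f g)) j = (\<Sum>p\<le>i. \<Sum>q\<le>j. \<Sum>r\<le>l. f p q r * g (i - p) (j - q) (l - r))"
    by (simp add: mul3_def)
  also have "\<dots> = (\<Sum>p\<le>i. \<Sum>r\<le>l. \<Sum>q\<le>j. f p q r * g (i - p) (j - q) (l - r))"
    by (intro sum.cong refl sum.swap)
  also have "\<dots> = fps_nth (\<Sum>p\<le>i. \<Sum>r\<le>l. T3 p r f * T3 (i-p) (l-r) g) j"
    by (simp add: fps_sum_nth fps_mult_nth atLeast0AtMost)
  finally show "fps_nth (T3 i l (mul3 f g)) j = fps_nth (\<Sum>p\<le>i. \<Sum>r\<le>l. T3 p r f * T3 (i-p) (l-r) g) j" .
qed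

lemma T3_add: "T3 i l (add3 f g) = T3 i l f + T3 i l g"
  by (rule fps_ext) (simp add: add3_def)

lemma sum_if_out: "(\<Sum>x\<in>A. if P then f x else 0) = (if P then sum f A else 0)"
  by simp

lemma mul3_single:
  assumes "\<And>p q r. (p, q, r) \<noteq> (pa, qa, ra) \<Longrightarrow> f p q r = 0"
  shows "mul3 f g i j l = (if pa \<le> i \<and> qa \<le> j \<and> ra \<le> l then f pa qa ra * g (i-pa) (j-qa) (l-ra) else 0)"
proof -
  define c where "c = f pa qa ra * g (i-pa) (j-qa) (l-ra)"
  have "mul3 f g i j l = (\<Sum>p\<le>i. \<Sum>q\<le>j. \<Sum>r\<le>l. if p = pa then if q = qa then if r = ra then c else 0 else 0 else 0)"
    unfolding mul3_def c_def by (intro sum.cong refl) (auto simp: assms)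
  also have "\<dots> = (if pa \<le> i \<and> qa \<le> j \<and> ra \<le> l then c else 0)"
    by (simp only: sum_if_out sum.delta[OF finite_atMost] atMost_iff) auto
  finally show ?thesis by (simp add: c_def)
qed

lemma mul3_X3: "(mul3 X3 g i j l::'a::comm_ring_1) = (if 1 \<le> i then g (i-1) j l else 0)"
    by (subst mul3_single[where pa=1 and qa=0 and ra=0]) (auto simp: X3_def)
lemma mul3_Y3: "mul3 Y3 g i j l = (if 1 \<le> j then g i (j-1) l else 0)"
  by (subst mul3_single[where pa=0 and qa=1 and ra=0]) (auto simp: Y3_def)
lemma mul3_Z3: "mul3 Z3 g i j l = (if 1 \<le> l then g i j (l-1) else 0)"
  by (subst mul3_single[where pa=0 and qa=0 and ra=1]) (auto simp: Z3_def)

lemma pow3_X3: "pow3 X3 k i j l = (if i = k \<and> j = 0 \<and> l = 0 then 1 else 0)"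
  by (induction k arbitrary: i) (auto simp: mul3_X3 one3_def)
lemma pow3_Y3: "pow3 Y3 k i j l = (if i = 0 \<and> j = k \<and> l = 0 then 1 else 0)"
  by (induction k arbitrary: j) (auto simp: mul3_Y3 one3_def)
lemma pow3_Z3: "pow3 Z3 k i j l = (if i = 0 \<and> j = 0 \<and> l = k then 1 else 0)"
  by (induction k arbitrary: l) (auto simp: mul3_Z3 one3_def)

lemma subst3_X3: "subst3 r X3 i j l = (if j = 0 \<and> l = 0 then r i else 0)"
  by (simp add: subst3_def pow3_X3 if_distrib[of "\<lambda>x. r _ * x"] cong: if_cong)
lemma subst3_Y3: "subst3 r Y3 i j l = (if i = 0 \<and> l = 0 then r j else 0)"
  by (simp add: subst3_def pow3_Y3 if_distrib[of "\<lambda>x. r _ * x"] cong: if_cong)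
lemma subst3_Z3: "subst3 r Z3 i j l = (if i = 0 \<and> j = 0 then r l else 0)"
  by (simp add: subst3_def pow3_Z3 if_distrib[of "\<lambda>x. r _ * x"] cong: if_cong)

lemma pow3_vanish:
  assumes "G 0 0 0 = 0"
  shows "i + j + l < k \<Longrightarrow> pow3 G k i j l = 0"
proof (induction k arbitrary: i j l)
  case 0 then show ?case by simp
next
  case (Suc k)
  have "G p q r * pow3 G k (i-p) (j-q) (l-r) = 0" if "p \<le> i" "q \<le> j" "r \<le> l" for p q r
  proof (cases "p = 0 \<and> q = 0 \<and> r = 0")
    case True then show ?thesis using assms by simp
  next
    case False
    then have "(i-p) + (j-q) + (l-r) < k" using that Suc.prems by auto
    then show ?thesis using Suc.IH by simp
  qed
  then show ?case unfolding pow3.simps mul3_def by (intro sum.neutral ballI) auto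
qed

lemma pow3_nox:
  assumes "\<And>i j l. 0 < i \<Longrightarrow> G i j l = 0"
  shows "0 < i \<Longrightarrow> pow3 G k i j l = 0"
proof (induction k arbitrary: i j l)
  case 0 then show ?case by (simp add: one3_def)
next
  case (Suc k)
  have "G p q r * pow3 G k (i-p) (j-q) (l-r) = 0" if "p \<le> i" for p q r
  proof (cases "p = 0")
    case True then show ?thesis using Suc by simp
  next
    case False
    then show ?thesis using assms by simp
  qed
  then show ?case unfolding pow3.simps mul3_def by (intro sum.neutral ballI) auto
qed

lemma T3_row:
  "T3 0 0 (mul3 f g) = T3 0 0 f * T3 0 0 g"
  "T3 1 0 (mul3 f g) = T3 0 0 f * T3 1 0 g + T3 1 0 f * T3 0 0 g"
  "T3 2 0 (mul3 f g) = T3 0 0 f * T3 2 0 g + T3 1 0 f * T3 1 0 g + T3 2 0 f * T3 0 0 g"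
  "T3 2 1 (mul3 f g) = T3 0 0 f * T3 2 1 g + T3 0 1 f * T3 2 0 g + T3 1 0 f * T3 1 1 g
      + T3 1 1 f * T3 1 0 g + T3 2 0 f * T3 0 1 g + T3 2 1 f * T3 0 0 g"
  by (simp_all add: T3_mul numeral_2_eq_2 algebra_simps)

lemma Fxy_closed: "abelF a X3 Y3 i j l =
   (if l = 0 then (if i = 1 then abelR a j else 0) + (if j = 1 then abelR a i else 0) else 0)"
  by (auto simp: abelF_def add3_def mul3_X3 mul3_Y3 subst3_X3 subst3_Y3)

lemma Fyz_closed: "abelF a Y3 Z3 i j l =
   (if i = 0 then (if j = 1 then abelR a l else 0) + (if l = 1 then abelR a j else 0) else 0)"
  by (auto simp: abelF_def add3_def mul3_Z3 mul3_Y3 subst3_Z3 subst3_Y3)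

lemma T3_Fxy: "T3 i l (abelF a X3 Y3) =
   (if l = 0 then (if i = 1 then Abs_fps (abelR a) else 0) + fps_const (abelR a i) * fps_X else 0)"
  by (rule fps_ext) (auto simp: Fxy_closed)

lemma T3_Fyz: "T3 i l (abelF a Y3 Z3) =
   (if i = 0 then fps_const (abelR a l) * fps_X + (if l = 1 then Abs_fps (abelR a) else 0) else 0)"
  by (rule fps_ext) (auto simp: Fyz_closed)

lemma T3_RX: "T3 i l (subst3 r X3) = (if l = 0 then fps_const (r i) else 0)"
  by (rule fps_ext) (auto simp: subst3_X3)

lemma T3_RZ: "T3 i l (subst3 r Z3) = (if i = 0 then fps_const (r l) else 0)"
  by (rule fps_ext) (auto simp: subst3_Z3)

lemma T3_one3: "T3 0 0 one3 = 1" "T3 1 0 one3 = 0" "T3 2 0 one3 = 0"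
  by (auto intro!: fps_ext simp: one3_def)

lemma powG:
  fixes G :: "'a::comm_ring_1 ser3"
  assumes "T3 0 0 G = fps_X"
  shows "T3 0 0 (pow3 G k) = fps_X^k \<and>
    fps_X * T3 1 0 (pow3 G k) = of_nat k * fps_X^k * T3 1 0 G \<and>
    fps_X^2 * T3 2 0 (pow3 G k) = of_nat k * fps_X^(k+1) * T3 2 0 G
         + of_nat (k choose 2) * fps_X^k * (T3 1 0 G)^2"
proof (induction k)
  case 0
  have "T3 1 0 (one3::'a ser3) = 0" by (rule T3_one3)
  then show ?case by (simp add: T3_one3 binomial_eq_0)
next
  case (Suc k)
  define B where "B = T3 1 0 G"
  define C where "C = T3 2 0 G"
  have h0: "T3 0 0 (pow3 G k) = fps_X^k" using Suc by simp
  have h1: "fps_X * T3 1 0 (pow3 G k) = of_nat k * fps_X^k * B" using Suc by (simp add: B_def)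
  have h2: "fps_X^2 * T3 2 0 (pow3 G k) = of_nat k * fps_X^(k+1) * C
         + of_nat (k choose 2) * fps_X^k * B^2" using Suc by (simp add: B_def C_def)
  have e0: "T3 0 0 (pow3 G (Suc k)) = fps_X^Suc k"
    unfolding pow3.simps T3_row using h0 assms by simp
  have "fps_X * T3 1 0 (pow3 G (Suc k)) = fps_X * (fps_X * T3 1 0 (pow3 G k)) + fps_X * B * fps_X^k"
    unfolding pow3.simps T3_row using h0 assms by (simp add: B_def algebra_simps)
  also have "\<dots> = of_nat (Suc k) * fps_X^(Suc k) * B"
    unfolding h1 by (simp add: algebra_simps)
  finally have e1: "fps_X * T3 1 0 (pow3 G (Suc k)) = of_nat (Suc k) * fps_X^(Suc k) * B" .
  have "fps_X^2 * T3 2 0 (pow3 G (Suc k)) = fps_X * (fps_X^2 * T3 2 0 (pow3 G k))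
       + fps_X * B * (fps_X * T3 1 0 (pow3 G k)) + fps_X^2 * C * fps_X^k"
    unfolding pow3.simps T3_row using h0 assms by (simp add: B_def C_def algebra_simps power2_eq_square)
  also have "\<dots> = of_nat (Suc k) * fps_X^(Suc k+1) * C
         + (of_nat (k choose 2) + of_nat k) * fps_X^(Suc k) * B^2"
    unfolding h1 h2 by (simp add: algebra_simps power2_eq_square)
  also have "of_nat (k choose 2) + of_nat k = (of_nat (Suc k choose 2) :: 'a fps)"
    by (simp add: numeral_2_eq_2)
  finally have e2: "fps_X^2 * T3 2 0 (pow3 G (Suc k)) = of_nat (Suc k) * fps_X^(Suc k+1) * C
         + of_nat (Suc k choose 2) * fps_X^(Suc k) * B^2" .
  show ?case using e0 e1 e2 by (simp add: B_def C_def)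
qed

lemma subst_row2:
  fixes G :: "'a::comm_ring_1 ser3"
  assumes G0: "T3 0 0 G = fps_X" and GC: "T3 2 0 G = fps_const c * fps_X"
  shows "fps_X^2 * T3 2 0 (subst3 r G) =
     Abs_fps (\<lambda>k. of_nat k * r k) * (fps_X * T3 2 0 G) +
     Abs_fps (\<lambda>k. of_nat (k choose 2) * r k) * (T3 1 0 G)^2"
proof (rule fps_ext)
  fix m
  define S1 where "S1 = Abs_fps (\<lambda>k. of_nat k * r k)"
  define S2 where "S2 = Abs_fps (\<lambda>k. of_nat (k choose 2) * r k)"
  define B where "B = T3 1 0 G"
  define C where "C = T3 2 0 G"
  have g000: "G 0 0 0 = 0"
    using arg_cong[OF G0, of "\<lambda>f. fps_nth f 0"] by simp
  show "fps_nth (fps_X^2 * T3 2 0 (subst3 r G)) m =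
     fps_nth (Abs_fps (\<lambda>k. of_nat k * r k) * (fps_X * T3 2 0 G) +
     Abs_fps (\<lambda>k. of_nat (k choose 2) * r k) * (T3 1 0 G)^2) m"
  proof (cases "m < 2")
    case True
    have a: "fps_nth (S1 * (fps_X * C)) m = 0"
    proof -
      have "S1 * (fps_X * C) = fps_X^2 * (S1 * fps_const c)"
        by (simp add: C_def GC algebra_simps power2_eq_square)
      then show ?thesis using True by (simp add: fps_X_power_mult_nth)
    qed
    have b: "fps_nth (S2 * B^2) m = 0"
      unfolding fps_mult_nth
      by (rule sum.neutral) (use True in \<open>auto simp: S2_def binomial_eq_0\<close>)
    show ?thesis using True a b
      by (simp add: fps_X_power_mult_nth S1_def S2_def B_def C_def)
  next
    case False
    then obtain n where m: "m = n + 2" by (metis add.commute le_Suc_ex not_less)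
    have "fps_nth (fps_X^2 * T3 2 0 (subst3 r G)) m = (\<Sum>k\<le>2+n+0. r k * pow3 G k 2 n 0)"
      by (simp add: m fps_X_power_mult_nth subst3_def)
    also have "\<dots> = (\<Sum>k\<le>m. r k * fps_nth (fps_X^2 * T3 2 0 (pow3 G k)) m)"
      by (simp add: m fps_X_power_mult_nth add.commute)
    also have "\<dots> = (\<Sum>k\<le>m. r k * fps_nth (of_nat k * fps_X^(k+1) * C
         + of_nat (k choose 2) * fps_X^k * B^2) m)"
      using powG[OF G0] by (simp add: B_def C_def)
    also have "\<dots> = (\<Sum>k\<le>m. fps_nth S1 k * fps_nth (fps_X * C) (m - k)
         + fps_nth S2 k * fps_nth (B^2) (m - k))"
    proof (intro sum.cong refl)
      fix k assume "k \<in> {..m}"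
      then have km: "k \<le> m" by simp
      have e1: "of_nat k * fps_X^(k+1) * C = fps_X^k * (fps_const (of_nat k) * (fps_X * C))"
        by (simp add: algebra_simps fps_of_nat)
      have e2: "of_nat (k choose 2) * fps_X^k * B^2 = fps_X^k * (fps_const (of_nat (k choose 2)) * B^2)"
        by (simp add: algebra_simps fps_of_nat)
      have "fps_nth (of_nat k * fps_X^(k+1) * C + of_nat (k choose 2) * fps_X^k * B^2) m =
         fps_nth (fps_X^k * (fps_const (of_nat k) * (fps_X * C))) m +
         fps_nth (fps_X^k * (fps_const (of_nat (k choose 2)) * B^2)) m"
        by (simp only: e1 e2 fps_add_nth)
      also have "\<dots> = of_nat k * fps_nth (fps_X * C) (m - k) + of_nat (k choose 2) * fps_nth (B^2) (m - k)"
        using km by (simp only: fps_X_power_mult_nth) simp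
      finally show "r k * fps_nth (of_nat k * fps_X^(k+1) * C
         + of_nat (k choose 2) * fps_X^k * B^2) m =
         fps_nth S1 k * fps_nth (fps_X * C) (m - k) + fps_nth S2 k * fps_nth (B^2) (m - k)"
        by (simp add: S1_def S2_def algebra_simps)
    qed
    also have "\<dots> = fps_nth (S1 * (fps_X * C) + S2 * B^2) m"
      by (simp add: fps_mult_nth sum.distrib atLeast0AtMost)
    finally show ?thesis by (simp add: S1_def S2_def B_def C_def)
  qed
qed

lemma assoc_eq:
  fixes a :: "nat \<Rightarrow> 'a::field_char_0"
  assumes "abel_assoc a"
  shows "fps_const (abelR a 2) * fps_X * fps_const (abelR a 1)
      + T3 2 0 (subst3 (abelR a) (abelF a X3 Y3))
    = (fps_const (abelR a 1) * fps_X + Abs_fps (abelR a)) * fps_const (abelR a 2)"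
proof -
  define G where "G = abelF a X3 Y3"
  define H where "H = abelF a Y3 Z3"
  have eq: "T3 2 1 (abelF a G Z3) = T3 2 1 (abelF a X3 H)"
    using assms unfolding abel_assoc_def G_def H_def by simp
  have l1: "T3 2 1 (mul3 G (subst3 (abelR a) Z3)) = fps_const (abelR a 2) * fps_X * fps_const (abelR a 1)"
    unfolding T3_row G_def by (simp add: T3_Fxy T3_RZ)
  have l2: "T3 2 1 (mul3 Z3 (subst3 (abelR a) G)) = T3 2 0 (subst3 (abelR a) G)"
    by (rule fps_ext) (simp add: mul3_Z3)
  have hx: "\<And>i j l. 0 < i \<Longrightarrow> H i j l = 0" by (simp add: H_def Fyz_closed)
  have r1: "T3 2 1 (mul3 X3 (subst3 (abelR a) H)) = 0"
    by (rule fps_ext) (simp add: mul3_X3 subst3_def pow3_nox[OF hx])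
  have r2: "T3 2 1 (mul3 H (subst3 (abelR a) X3)) = (fps_const (abelR a 1) * fps_X + Abs_fps (abelR a)) * fps_const (abelR a 2)"
    unfolding T3_row H_def by (simp add: T3_Fyz T3_RX)
  show ?thesis
    using eq[unfolded abelF_def[of a G Z3] abelF_def[of a X3 H] T3_add l1 l2 r1 r2]
    unfolding G_def by simp
qed

lemma two_choose: "2 * (n choose 2) = n * (n - 1)"
proof -
  have "even (n * (n - 1))" by (cases "even n") auto
  then show ?thesis by (simp add: choose_two)
qed

definition Pser :: "(nat \<Rightarrow> 'a::field_char_0) \<Rightarrow> 'a fps" where
  "Pser a = Abs_fps (\<lambda>n. if n = 0 then 1 else a n)"

lemma Pser_nth: "fps_nth (Pser a) 0 = 1" "fps_nth (Pser a) (Suc 0) = a 1"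
  by (simp_all add: Pser_def)

lemma R_eq: "Abs_fps (abelR a) = Pser a - fps_const (a 1 / 2) * fps_X"
  by (rule fps_ext) (simp add: Pser_def abelR_def)

lemma S1_eq: "Abs_fps (\<lambda>k. of_nat k * r k) = fps_X * fps_deriv (Abs_fps r)"
  by (rule fps_ext) auto

lemma S2_eq: "fps_const 2 * Abs_fps (\<lambda>k. of_nat (k choose 2) * (r k::'a::field_char_0)) =
   fps_X^2 * fps_deriv (fps_deriv (Abs_fps r))"
proof (rule fps_ext)
  fix n
  show "fps_nth (fps_const 2 * Abs_fps (\<lambda>k. of_nat (k choose 2) * r k)) n =
      fps_nth (fps_X^2 * fps_deriv (fps_deriv (Abs_fps r))) n"
  proof (cases "n < 2")
    case True
    then have "n = 0 \<or> n = 1" by auto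
    then show ?thesis by (auto simp: fps_X_power_mult_nth)
  next
    case False
    then obtain m where n: "n = m + 2" by (metis add.commute le_Suc_ex not_less)
    have "(2::'a) * of_nat (n choose 2) = of_nat (2 * (n choose 2))" by simp
    also have "\<dots> = of_nat (n * (n - 1))" by (simp only: two_choose)
    also have "\<dots> = of_nat (m + 2) * of_nat (m + 1)" by (simp add: n algebra_simps)
    finally have "(2::'a) * of_nat (n choose 2) = of_nat (m + 2) * of_nat (m + 1)" .
    then have "fps_nth (fps_const 2 * Abs_fps (\<lambda>k. of_nat (k choose 2) * r k)) n
       = of_nat (m + 2) * of_nat (m + 1) * r n"
      by (simp add: mult.assoc[symmetric])
    also have "\<dots> = fps_nth (fps_X^2 * fps_deriv (fps_deriv (Abs_fps r))) n"
      by (simp add: n fps_X_power_mult_nth)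
    finally show ?thesis .
  qed
qed

lemma ode2:
  fixes a :: "nat \<Rightarrow> 'a::field_char_0"
  assumes "abel_assoc a"
  shows "(Pser a)^2 * fps_deriv (fps_deriv (Pser a)) =
     fps_const (2 * a 2) * (Pser a - fps_X * fps_deriv (Pser a))"
proof -
  define P where "P = Pser a"
  define R where "R = Abs_fps (abelR a)"
  define G where "G = abelF a X3 Y3"
  have G0: "T3 0 0 G = fps_X" by (simp add: G_def T3_Fxy abelR_def)
  have G2: "T3 2 0 G = fps_const (a 2) * fps_X" by (simp add: G_def T3_Fxy abelR_def)
  have G1: "T3 1 0 G = P" by (simp add: G_def T3_Fxy P_def R_eq abelR_def)
  have Rd: "fps_deriv R = fps_deriv P - fps_const (a 1 / 2)"
    by (simp add: R_def R_eq P_def)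
  have Rdd: "fps_deriv (fps_deriv R) = fps_deriv (fps_deriv P)"
    by (simp add: Rd)
  have e: "fps_const (a 2) * fps_X * fps_const (a 1 / 2) + T3 2 0 (subst3 (abelR a) G)
    = P * fps_const (a 2)"
    using assoc_eq[OF assms] by (simp add: G_def abelR_def P_def R_eq)
  have sr: "fps_X^2 * T3 2 0 (subst3 (abelR a) G) =
     Abs_fps (\<lambda>k. of_nat k * abelR a k) * (fps_X * T3 2 0 G) +
     Abs_fps (\<lambda>k. of_nat (k choose 2) * abelR a k) * (T3 1 0 G)^2"
    by (rule subst_row2[OF G0 G2])
  define T where "T = T3 2 0 (subst3 (abelR a) G)"
  define S1 where "S1 = Abs_fps (\<lambda>k. of_nat k * abelR a k)"
  define S2 where "S2 = Abs_fps (\<lambda>k. of_nat (k choose 2) * abelR a k)"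
  have s1: "S1 = fps_X * fps_deriv R" unfolding S1_def R_def by (rule S1_eq)
  have s2: "fps_const 2 * S2 = fps_X^2 * fps_deriv (fps_deriv R)" unfolding S2_def R_def by (rule S2_eq)
  have h1: "fps_const 2 * (fps_X^2 * T) = fps_const 2 * S1 * (fps_X * (fps_const (a 2) * fps_X)) + (fps_const 2 * S2) * P^2"
    using sr unfolding T_def S1_def S2_def G1 G2 by (simp add: algebra_simps del: fps_const_mult)
  also have "\<dots> = fps_X^2 * (fps_const 2 * fps_const (a 2) * fps_X * fps_deriv R + P^2 * fps_deriv (fps_deriv R))"
    unfolding s1 s2 by (simp add: algebra_simps power2_eq_square del: fps_const_mult)
  finally have h2: "fps_const 2 * (fps_X^2 * T) = fps_X^2 * (fps_const 2 * fps_const (a 2) * fps_X * fps_deriv R + P^2 * fps_deriv (fps_deriv R))" .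
  have e2: "fps_const 2 * fps_X^2 * (fps_const (a 2) * fps_X * fps_const (a 1 / 2)) + fps_const 2 * (fps_X^2 * T)
     = fps_const 2 * fps_X^2 * (P * fps_const (a 2))"
    using arg_cong[OF e[folded T_def], of "\<lambda>u. fps_const 2 * fps_X^2 * u"] by (simp add: algebra_simps del: fps_const_mult)
  have "fps_X^2 * (P^2 * fps_deriv (fps_deriv P) - fps_const 2 * fps_const (a 2) * (P - fps_X * fps_deriv P)) =
     fps_const 2 * fps_X^2 * (fps_const (a 2) * fps_X * fps_const (a 1 / 2)) + fps_const 2 * (fps_X^2 * T)
     - fps_const 2 * fps_X^2 * (P * fps_const (a 2))"
    unfolding h2 Rd Rdd by (simp add: algebra_simps power2_eq_square del: fps_const_mult)
  also have "\<dots> = 0" using e2 by simp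
  finally have "fps_X^2 * (P^2 * fps_deriv (fps_deriv P) - fps_const (2 * a 2) * (P - fps_X * fps_deriv P)) = 0"
    by simp
  then show ?thesis by (simp add: P_def)
qed

lemma deriv_zero_unique:
  fixes Q P :: "'a::field_char_0 fps"
  assumes P0: "fps_nth P 0 \<noteq> 0" and e: "P * fps_deriv Q = fps_deriv P * Q" and Q0: "fps_nth Q 0 = 0"
  shows "Q = 0"
proof -
  define W where "W = Q * inverse P"
  have iP: "P * inverse P = 1" using P0 by (rule inverse_mult_eq_1')
  have "P^2 * fps_deriv W = P * fps_deriv Q * (P * inverse P) - Q * fps_deriv P * (P * inverse P)^2"
    unfolding W_def using P0 by (simp add: fps_inverse_deriv algebra_simps power2_eq_square)
  also have "\<dots> = 0" using e by (simp add: iP algebra_simps)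
  finally have "P^2 * fps_deriv W = 0" .
  moreover have "P^2 \<noteq> 0" using P0 by (auto simp: power2_eq_square)
  ultimately have "fps_deriv W = 0" by simp
  then have "W = fps_const (fps_nth W 0)" by simp
  also have "fps_nth W 0 = 0" by (simp add: W_def Q0)
  finally have "W = 0" by simp
  have "Q = W * P" unfolding W_def using iP by (simp add: algebra_simps)
  then show ?thesis using \<open>W = 0\<close> by simp
qed

lemma ode1:
  fixes P :: "'a::field_char_0 fps"
  assumes o2: "P^2 * fps_deriv (fps_deriv P) = fps_const (2 * c2) * (P - fps_X * fps_deriv P)"
    and P0: "fps_nth P 0 = 1" and P1: "fps_nth P 1 = c1"
  shows "P * fps_deriv P = fps_const c1 * P + fps_const (2 * c2) * fps_X"
proof -
  define Q where "Q = P * fps_deriv P - fps_const c1 * P - fps_const (2 * c2) * fps_X"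
  have dQ: "fps_deriv Q = fps_deriv P * fps_deriv P + P * fps_deriv (fps_deriv P) - fps_const c1 * fps_deriv P - fps_const (2 * c2)"
    by (simp add: Q_def)
  have "P * fps_deriv Q = fps_deriv P * Q"
  proof -
    have "P * fps_deriv Q = P * fps_deriv P * fps_deriv P + P^2 * fps_deriv (fps_deriv P) - fps_const c1 * P * fps_deriv P - fps_const (2 * c2) * P"
      unfolding dQ by (simp add: algebra_simps power2_eq_square)
    also have "\<dots> = fps_deriv P * Q"
      unfolding o2 Q_def by (simp add: algebra_simps)
    finally show ?thesis .
  qed
  moreover have "fps_nth Q 0 = 0" using P0 P1 by (simp add: Q_def)
  ultimately have "Q = 0" using deriv_zero_unique[of P Q] P0 by simp
  then show ?thesis by (simp add: Q_def algebra_simps)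
qed

definition ExL :: "'a::field_char_0 fps \<Rightarrow> 'a \<Rightarrow> 'a fps" where
  "ExL L s = fps_exp s oo L"

lemma ExL_add: "fps_nth L 0 = 0 \<Longrightarrow> ExL L (s + t) = ExL L s * ExL L t"
  by (simp add: ExL_def fps_exp_add_mult fps_compose_mult_distrib)

lemma ExL_0: "ExL L 0 = 1"
  by (simp add: ExL_def)

lemma ExL_nth0: "fps_nth (ExL L s) 0 = 1"
  by (simp add: ExL_def)

lemma ExL_deriv: "fps_nth L 0 = 0 \<Longrightarrow> fps_deriv (ExL L s) = fps_const s * ExL L s * fps_deriv L"
  by (simp add: ExL_def fps_compose_deriv fps_const_mult_apply_left)

lemma ExL_nth: "fps_nth (ExL L s) n = (\<Sum>k=0..n. s^k / fact k * fps_nth (L^k) n)"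
  by (simp add: ExL_def fps_compose_nth)

lemma ExL_unique:
  fixes P L Y :: "'a::field_char_0 fps"
  assumes L0: "fps_nth L 0 = 0" and LP: "fps_deriv L * P = 1"
    and Y: "fps_deriv Y * P = fps_const c * Y"
  shows "Y = fps_const (fps_nth Y 0) * ExL L c"
proof -
  define W where "W = Y * ExL L (-c)"
  have "fps_deriv W * P = (fps_deriv Y * P) * ExL L (-c) - fps_const c * Y * ExL L (-c) * (fps_deriv L * P)"
    unfolding W_def using L0 by (simp add: ExL_deriv algebra_simps flip: fps_const_neg)
  also have "\<dots> = 0" unfolding Y LP by simp
  finally have "fps_deriv W * P = 0" .
  moreover have "P \<noteq> 0" using LP by auto
  ultimately have "fps_deriv W = 0" by simp
  then have "W = fps_const (fps_nth W 0)" by simp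
  also have "fps_nth W 0 = fps_nth Y 0" by (simp add: W_def ExL_nth0)
  finally have W: "W = fps_const (fps_nth Y 0)" .
  have "ExL L c * ExL L (-c) = 1" using ExL_add[of L c "-c"] L0 by (simp add: ExL_0)
  then have "Y = Y * (ExL L c * ExL L (-c))" by simp
  also have "\<dots> = W * ExL L c" unfolding W_def by (simp add: algebra_simps)
  finally show ?thesis using W by simp
qed

lemma ExL_sols:
  fixes P L :: "'a::field_char_0 fps"
  assumes L0: "fps_nth L 0 = 0" and LP: "fps_deriv L * P = 1"
    and o1: "P * fps_deriv P = fps_const (\<alpha> + \<beta>) * P - fps_const (\<alpha> * \<beta>) * fps_X"
    and P0: "fps_nth P 0 = 1"
  shows "ExL L \<alpha> = P - fps_const \<beta> * fps_X"
proof -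
  define G where "G = P - fps_const \<beta> * fps_X"
  have "fps_deriv G * P = P * fps_deriv P - fps_const \<beta> * P"
    by (simp add: G_def algebra_simps)
  also have "\<dots> = fps_const \<alpha> * G"
    unfolding o1 G_def by (simp add: algebra_simps flip: fps_const_mult fps_const_add)
  finally have "fps_deriv G * P = fps_const \<alpha> * G" .
  then have "G = fps_const (fps_nth G 0) * ExL L \<alpha>" using ExL_unique[OF L0 LP] by blast
  moreover have "fps_nth G 0 = 1" by (simp add: G_def P0)
  ultimately have "G = ExL L \<alpha>" by simp
  then show ?thesis by (simp add: G_def)
qed

lemma L_eq_case:
  fixes P L :: "'a::field_char_0 fps"
  assumes L0: "fps_nth L 0 = 0" and LP: "fps_deriv L * P = 1"
    and E: "ExL L \<alpha> = P - fps_const \<alpha> * fps_X"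
  shows "L * ExL L \<alpha> = fps_X"
proof -
  define W where "W = L * ExL L \<alpha> - fps_X"
  have "fps_deriv W * P = (fps_deriv L * P) * ExL L \<alpha> + fps_const \<alpha> * L * ExL L \<alpha> * (fps_deriv L * P) - P"
    unfolding W_def using L0 by (simp add: ExL_deriv algebra_simps)
  also have "\<dots> = fps_const \<alpha> * W"
    unfolding LP W_def by (simp add: E algebra_simps)
  finally have "fps_deriv W * P = fps_const \<alpha> * W" .
  then have "W = fps_const (fps_nth W 0) * ExL L \<alpha>" using ExL_unique[OF L0 LP] by blast
  moreover have "fps_nth W 0 = 0" by (simp add: W_def L0)
  ultimately have "W = 0" by simp
  then show ?thesis by (simp add: W_def)
qed

definition ec :: "'a::field_char_0 \<Rightarrow> 'a \<Rightarrow> nat \<Rightarrow> 'a \<Rightarrow> 'a" where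
  "ec \<alpha> \<beta> n s = (if n = 0 then 1 else
     s / fact n * (\<Prod>j=1..n-1. s - (of_nat j * \<alpha> + of_nat (n-j) * \<beta>)))"

lemma ec_0: "ec \<alpha> \<beta> (Suc n) 0 = 0"
  by (simp add: ec_def)

lemma ec_delta: "ec \<alpha> \<beta> (Suc n) (s + \<alpha>) - ec \<alpha> \<beta> (Suc n) (s + \<beta>) = (\<alpha> - \<beta>) * ec \<alpha> \<beta> n s"
proof (cases n)
  case 0
  then show ?thesis by (simp add: ec_def)
next
  case (Suc k)
  define PiP where "PiP = (\<Prod>i=1..k. s - (of_nat i * \<alpha> + of_nat (Suc k - i) * \<beta>))"
  have A: "(\<Prod>j=1..Suc k. s + \<alpha> - (of_nat j * \<alpha> + of_nat (Suc (Suc k) - j) * \<beta>))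
      = (s - of_nat (Suc k) * \<beta>) * PiP"
  proof -
    have "(\<Prod>j=1..Suc k. s + \<alpha> - (of_nat j * \<alpha> + of_nat (Suc (Suc k) - j) * \<beta>))
       = (s + \<alpha> - (of_nat 1 * \<alpha> + of_nat (Suc (Suc k) - 1) * \<beta>)) *
         (\<Prod>j=Suc 1..Suc k. s + \<alpha> - (of_nat j * \<alpha> + of_nat (Suc (Suc k) - j) * \<beta>))"
      by (rule prod.atLeast_Suc_atMost) simp
    also have "(\<Prod>j=Suc 1..Suc k. s + \<alpha> - (of_nat j * \<alpha> + of_nat (Suc (Suc k) - j) * \<beta>))
       = (\<Prod>i=1..k. s + \<alpha> - (of_nat (Suc i) * \<alpha> + of_nat (Suc (Suc k) - Suc i) * \<beta>))"
      by (rule prod.shift_bounds_cl_Suc_ivl)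
    also have "\<dots> = PiP" unfolding PiP_def
      by (intro prod.cong refl) (simp add: algebra_simps)
    finally show ?thesis by (simp add: algebra_simps)
  qed
  have B: "(\<Prod>j=1..Suc k. s + \<beta> - (of_nat j * \<alpha> + of_nat (Suc (Suc k) - j) * \<beta>))
      = PiP * (s - of_nat (Suc k) * \<alpha>)"
  proof -
    have "(\<Prod>j=1..Suc k. s + \<beta> - (of_nat j * \<alpha> + of_nat (Suc (Suc k) - j) * \<beta>))
       = (\<Prod>j=1..k. s + \<beta> - (of_nat j * \<alpha> + of_nat (Suc (Suc k) - j) * \<beta>)) *
          (s + \<beta> - (of_nat (Suc k) * \<alpha> + of_nat (Suc (Suc k) - Suc k) * \<beta>))"
      by simp
    also have "(\<Prod>j=1..k. s + \<beta> - (of_nat j * \<alpha> + of_nat (Suc (Suc k) - j) * \<beta>)) = PiP"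
      unfolding PiP_def
    proof (intro prod.cong refl)
      fix j assume "j \<in> {1..k}"
      then have "Suc (Suc k) - j = Suc (Suc k - j)" by auto
      then show "s + \<beta> - (of_nat j * \<alpha> + of_nat (Suc (Suc k) - j) * \<beta>) =
          s - (of_nat j * \<alpha> + of_nat (Suc k - j) * \<beta>)"
        by (simp add: algebra_simps)
    qed
    finally show ?thesis by (simp add: algebra_simps)
  qed
  have ecS: "ec \<alpha> \<beta> (Suc (Suc k)) u = u / fact (Suc (Suc k)) *
      (\<Prod>j=1..Suc k. u - (of_nat j * \<alpha> + of_nat (Suc (Suc k) - j) * \<beta>))" for u
    by (simp add: ec_def)
  have ec1: "ec \<alpha> \<beta> (Suc k) s = s / fact (Suc k) * PiP"
    by (simp add: ec_def PiP_def)
  have "ec \<alpha> \<beta> (Suc (Suc k)) (s + \<alpha>) - ec \<alpha> \<beta> (Suc (Suc k)) (s + \<beta>)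
      = ((s + \<alpha>) * (s - of_nat (Suc k) * \<beta>) - (s + \<beta>) * (s - of_nat (Suc k) * \<alpha>)) * PiP / fact (Suc (Suc k))"
  proof -
    have gen: "\<And>F c. (s + \<alpha>) / F * ((s - c * \<beta>) * PiP) - (s + \<beta>) / F * (PiP * (s - c * \<alpha>))
       = ((s + \<alpha>) * (s - c * \<beta>) - (s + \<beta>) * (s - c * \<alpha>)) * PiP / F"
      by (simp add: divide_inverse algebra_simps)
    show ?thesis unfolding ecS A B by (rule gen)
  qed
  also have "(s + \<alpha>) * (s - of_nat (Suc k) * \<beta>) - (s + \<beta>) * (s - of_nat (Suc k) * \<alpha>)
      = of_nat (Suc (Suc k)) * s * (\<alpha> - \<beta>)"
    by (simp add: algebra_simps)
  also have "of_nat (Suc (Suc k)) * s * (\<alpha> - \<beta>) * PiP / fact (Suc (Suc k)) = (\<alpha> - \<beta>) * (s / fact (Suc k) * PiP)"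
  proof -
    have gen2: "\<And>N F. N \<noteq> 0 \<Longrightarrow> F \<noteq> 0 \<Longrightarrow> N * s * (\<alpha> - \<beta>) * PiP / (N * F) = (\<alpha> - \<beta>) * (s / F * PiP)"
      by (simp add: field_simps)
    have f: "(fact (Suc (Suc k)) :: 'a) = of_nat (Suc (Suc k)) * fact (Suc k)"
      by (rule fact_Suc)
    show ?thesis unfolding f by (rule gen2[OF of_nat_neq_0 fact_nonzero])
  qed
  finally show ?thesis using ec1 Suc by simp
qed

definition pe :: "'a::field_char_0 fps \<Rightarrow> nat \<Rightarrow> 'a poly" where
  "pe L n = (\<Sum>k=0..n. monom (fps_nth (L^k) n / fact k) k)"

definition pc :: "'a::field_char_0 \<Rightarrow> 'a \<Rightarrow> nat \<Rightarrow> 'a poly" where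
  "pc \<alpha> \<beta> n = (if n = 0 then 1 else smult (1 / fact n)
     (pCons 0 (\<Prod>j=1..n-1. [:- (of_nat j * \<alpha> + of_nat (n-j) * \<beta>), 1:])))"

lemma poly_pe: "poly (pe L n) s = fps_nth (ExL L s) n"
  by (simp add: pe_def ExL_nth poly_sum poly_monom algebra_simps)

lemma poly_pc: "poly (pc \<alpha> \<beta> n) s = ec \<alpha> \<beta> n s"
  by (simp add: pc_def ec_def poly_prod algebra_simps)

lemma coeff_pe: "1 \<le> n \<Longrightarrow> coeff (pe L n) 1 = fps_nth L n"
proof -
  assume n: "1 \<le> n"
  have "coeff (pe L n) 1 = (\<Sum>k=0..n. if k = 1 then fps_nth (L^k) n / fact k else 0)"
    by (simp add: pe_def coeff_sum coeff_monom)
  also have "\<dots> = fps_nth L n" using n by (simp add: sum.delta')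
  finally show ?thesis .
qed

lemma coeff_pc: "1 \<le> n \<Longrightarrow> coeff (pc \<alpha> \<beta> n) 1 =
   1 / fact n * (\<Prod>j=1..n-1. - (of_nat j * \<alpha> + of_nat (n-j) * \<beta>))"
proof -
  assume n: "1 \<le> n"
  have "coeff (pc \<alpha> \<beta> n) 1 = 1 / fact n * coeff (\<Prod>j=1..n-1. [:- (of_nat j * \<alpha> + of_nat (n-j) * \<beta>), 1:]) 0"
    using n by (simp add: pc_def)
  also have "coeff (\<Prod>j=1..n-1. [:- (of_nat j * \<alpha> + of_nat (n-j) * \<beta>), 1:]) 0 =
      (\<Prod>j=1..n-1. - (of_nat j * \<alpha> + of_nat (n-j) * \<beta>))"
    by (simp add: poly_0_coeff_0[symmetric] poly_prod)
  finally show ?thesis .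
qed

lemma poly_periodic_zero:
  fixes D :: "'a::field_char_0 poly"
  assumes g: "\<gamma> \<noteq> 0" and r: "\<And>k. poly D (of_nat k * \<gamma>) = 0"
  shows "D = 0"
proof (rule ccontr)
  assume "D \<noteq> 0"
  then have fin: "finite {x. poly D x = 0}" by (rule poly_roots_finite)
  have "range (\<lambda>k::nat. of_nat k * \<gamma>) \<subseteq> {x. poly D x = 0}" using r by auto
  moreover have "infinite (range (\<lambda>k::nat. of_nat k * \<gamma>))"
    by (rule range_inj_infinite) (auto simp: inj_on_def g)
  ultimately show False using fin finite_subset by blast
qed

lemma case_ne:
  fixes L :: "'a::field_char_0 fps"
  assumes L0: "fps_nth L 0 = 0" and D: "ExL L \<alpha> - ExL L \<beta> = fps_const (\<alpha> - \<beta>) * fps_X"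
    and ne: "\<alpha> \<noteq> \<beta>"
  shows "\<forall>s. fps_nth (ExL L s) n = ec \<alpha> \<beta> n s"
proof (induction n)
  case 0
  then show ?case by (simp add: ExL_nth0 ec_def)
next
  case (Suc m)
  define d where "d s = fps_nth (ExL L s) (Suc m) - ec \<alpha> \<beta> (Suc m) s" for s
  have dl: "fps_nth (ExL L (s + \<alpha>)) (Suc m) - fps_nth (ExL L (s + \<beta>)) (Suc m) = (\<alpha> - \<beta>) * fps_nth (ExL L s) m" for s
  proof -
    have "ExL L (s + \<alpha>) - ExL L (s + \<beta>) = ExL L s * (ExL L \<alpha> - ExL L \<beta>)"
      using L0 by (simp add: ExL_add algebra_simps)
    also have "\<dots> = fps_const (\<alpha> - \<beta>) * (fps_X * ExL L s)" unfolding D by (simp add: algebra_simps)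
    finally have "fps_nth (ExL L (s + \<alpha>) - ExL L (s + \<beta>)) (Suc m) = fps_nth (fps_const (\<alpha> - \<beta>) * (fps_X * ExL L s)) (Suc m)"
      by simp
    then show ?thesis by simp
  qed
  have per: "d (t + (\<alpha> - \<beta>)) = d t" for t
  proof -
    have a1: "t - \<beta> + \<alpha> = t + (\<alpha> - \<beta>)" "t - \<beta> + \<beta> = t" by (simp_all add: algebra_simps)
    have e1: "fps_nth (ExL L (t + (\<alpha> - \<beta>))) (Suc m) - fps_nth (ExL L t) (Suc m) = (\<alpha> - \<beta>) * ec \<alpha> \<beta> m (t - \<beta>)"
      using dl[of "t - \<beta>"] Suc.IH unfolding a1 by simp
    have e2: "ec \<alpha> \<beta> (Suc m) (t + (\<alpha> - \<beta>)) - ec \<alpha> \<beta> (Suc m) t = (\<alpha> - \<beta>) * ec \<alpha> \<beta> m (t - \<beta>)"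
      using ec_delta[of \<alpha> \<beta> m "t - \<beta>"] unfolding a1 .
    have "d (t + (\<alpha> - \<beta>)) - d t = (fps_nth (ExL L (t + (\<alpha> - \<beta>))) (Suc m) - fps_nth (ExL L t) (Suc m))
        - (ec \<alpha> \<beta> (Suc m) (t + (\<alpha> - \<beta>)) - ec \<alpha> \<beta> (Suc m) t)"
      by (simp add: d_def algebra_simps)
    also have "\<dots> = 0" unfolding e1 e2 by simp
    finally show ?thesis by simp
  qed
  have d0: "d (of_nat k * (\<alpha> - \<beta>)) = 0" for k
  proof (induction k)
    case 0
    then show ?case by (simp add: d_def ExL_0 ec_0)
  next
    case (Suc k)
    then show ?case using per[of "of_nat k * (\<alpha> - \<beta>)"] by (simp add: algebra_simps)
  qed
  have dp: "d s = poly (pe L (Suc m) - pc \<alpha> \<beta> (Suc m)) s" for s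
    by (simp add: d_def poly_pe poly_pc)
  have "pe L (Suc m) - pc \<alpha> \<beta> (Suc m) = 0"
    by (rule poly_periodic_zero[of "\<alpha> - \<beta>"]) (use ne d0 dp in auto)
  then show ?case using dp by (simp add: d_def)
qed

lemma helper3: "(N::complex) \<noteq> 0 \<Longrightarrow> 1 / (N * F) * (- (N * a) * Y) = - a / F * Y"
  by (cases "F = 0") (auto simp: field_simps)

lemma div_cancel_helper: "(N::complex) \<noteq> 0 \<Longrightarrow> N / (N * F) = 1 / F"
  by (cases "F = 0") (auto simp: field_simps)

lemma div_cancel_helper2: "(N::complex) \<noteq> 0 \<Longrightarrow> N * X / (N * F) = X / F"
  by (cases "F = 0") (auto simp: field_simps)

lemma Ln_ne:
  fixes L :: "'a::field_char_0 fps"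
  assumes L0: "fps_nth L 0 = 0" and D: "ExL L \<alpha> - ExL L \<beta> = fps_const (\<alpha> - \<beta>) * fps_X"
    and ne: "\<alpha> \<noteq> \<beta>" and n: "1 \<le> n"
  shows "fps_nth L n = 1 / fact n * (\<Prod>j=1..n-1. - (of_nat j * \<alpha> + of_nat (n-j) * \<beta>))"
proof -
  have "poly (pe L n) = poly (pc \<alpha> \<beta> n)"
    using case_ne[OF L0 D ne, of n] by (auto simp: poly_pe poly_pc)
  then have "pe L n = pc \<alpha> \<beta> n" by (simp add: poly_eq_poly_eq_iff)
  then show ?thesis using coeff_pe[OF n, of L] coeff_pc[OF n, of \<alpha> \<beta>] by simp
qed

lemma ec_eq: "ec \<alpha> \<alpha> (Suc m) s = s / fact (Suc m) * (s - of_nat (Suc m) * \<alpha>)^m"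
proof -
  have "(\<Prod>j=1..m. s - (of_nat j * \<alpha> + of_nat (Suc m - j) * \<alpha>)) = (\<Prod>j=1..m. s - of_nat (Suc m) * \<alpha>)"
  proof (intro prod.cong refl)
    fix j assume "j \<in> {1..m}"
    then have "of_nat j + of_nat (Suc m - j) = (of_nat (Suc m) :: 'a)"
      by (simp flip: of_nat_add)
    then show "s - (of_nat j * \<alpha> + of_nat (Suc m - j) * \<alpha>) = s - of_nat (Suc m) * \<alpha>"
      by (simp add: distrib_right[symmetric])
  qed
  then show ?thesis by (simp add: ec_def)
qed

lemma ExL_deriv_s:
  fixes L :: "complex fps"
  assumes L0: "fps_nth L 0 = 0"
  shows "((\<lambda>s. fps_nth (ExL L s) N) has_field_derivative fps_nth (L * ExL L s) N) (at s)"
proof -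
  have "((\<lambda>s. \<Sum>k=0..N. s^k / fact k * fps_nth (L^k) N) has_field_derivative
      (\<Sum>k=0..N. of_nat k * s^(k-1) / fact k * fps_nth (L^k) N)) (at s)"
    by (rule DERIV_sum) (auto intro!: derivative_eq_intros)
  moreover have "(\<Sum>k=0..N. of_nat k * s^(k-1) / fact k * fps_nth (L^k) N) = fps_nth (L * ExL L s) N"
  proof -
    have "L * ExL L s = (fps_X * fps_exp s) oo L"
      using L0 by (simp add: ExL_def fps_compose_mult_distrib)
    then have "fps_nth (L * ExL L s) N = (\<Sum>k=0..N. fps_nth (fps_X * fps_exp s) k * fps_nth (L^k) N)"
      by (simp add: fps_compose_nth)
    also have "\<dots> = (\<Sum>k=0..N. of_nat k * s^(k-1) / fact k * fps_nth (L^k) N)"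
    proof (intro sum.cong refl)
      fix k
      show "fps_nth (fps_X * fps_exp s) k * fps_nth (L^k) N = of_nat k * s^(k-1) / fact k * fps_nth (L^k) N"
      proof (cases k)
        case 0 then show ?thesis by simp
      next
        case (Suc j)
        have "(of_nat (Suc j) :: complex) / fact (Suc j) = of_nat (Suc j) / (of_nat (Suc j) * fact j)"
          by (simp only: fact_Suc[of j] of_nat_mult)
        also have "\<dots> = 1 / fact j" by (rule div_cancel_helper[OF of_nat_neq_0])
        finally have fj: "(of_nat (Suc j) :: complex) / fact (Suc j) = 1 / fact j" .
        have "of_nat (Suc j) * s^j / fact (Suc j) = ((of_nat (Suc j) :: complex) / fact (Suc j)) * s^j"
          by (simp only: divide_inverse mult_ac)
        also have "\<dots> = s^j / fact j" unfolding fj by simp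
        finally have "of_nat (Suc j) * s^j / fact (Suc j) = s^j / (fact j :: complex)" .
        then show ?thesis using Suc by simp
      qed
    qed
    finally show ?thesis by simp
  qed
  ultimately show ?thesis by (simp add: ExL_nth)
qed

lemma ec_deriv:
  "((\<lambda>s. ec \<alpha> \<alpha> (Suc m) s) has_field_derivative ec \<alpha> \<alpha> m (s - \<alpha>)) (at (s::complex))"
proof -
  define c where "c = of_nat (Suc m) * \<alpha>"
  define F where "F = (fact (Suc m) :: complex)"
  have F0: "F \<noteq> 0" unfolding F_def by (rule fact_nonzero)
  have "((\<lambda>s. s * (s - c)^m) has_field_derivative ((s - c)^m + s * (of_nat m * (s - c)^(m-1)))) (at s)"
    by (auto intro!: derivative_eq_intros)
  then have "((\<lambda>s. s * (s - c)^m / F) has_field_derivative ((s - c)^m + s * (of_nat m * (s - c)^(m-1))) / F) (at s)"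
    by (rule DERIV_cdivide)
  moreover have "((s - c)^m + s * (of_nat m * (s - c)^(m-1))) / F = ec \<alpha> \<alpha> m (s - \<alpha>)"
  proof (cases m)
    case 0
    then show ?thesis by (simp add: ec_def F_def)
  next
    case (Suc k)
    define F1 where "F1 = (fact (Suc k) :: complex)"
    have F1: "F1 \<noteq> 0" unfolding F1_def by (rule fact_nonzero)
    have f: "F = of_nat (Suc (Suc k)) * F1"
      unfolding F_def F1_def Suc by (rule fact_Suc)
    have c: "s - \<alpha> - of_nat (Suc k) * \<alpha> = s - c" by (simp add: c_def Suc algebra_simps)
    have "(s - c)^m + s * (of_nat m * (s - c)^(m-1)) = (s - c)^k * ((s - c) + of_nat (Suc k) * s)"
      by (simp add: Suc algebra_simps)
    also have "(s - c) + of_nat (Suc k) * s = of_nat (Suc (Suc k)) * (s - \<alpha>)"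
      by (simp add: c_def Suc algebra_simps)
    finally have "((s - c)^m + s * (of_nat m * (s - c)^(m-1))) / F
        = of_nat (Suc (Suc k)) * ((s - c)^k * (s - \<alpha>)) / (of_nat (Suc (Suc k)) * F1)"
      unfolding f by (simp add: algebra_simps)
    also have "\<dots> = (s - c)^k * (s - \<alpha>) / F1"
      by (rule div_cancel_helper2[OF of_nat_neq_0])
    also have "\<dots> = ec \<alpha> \<alpha> m (s - \<alpha>)" unfolding Suc ec_eq c F1_def by simp
    finally show ?thesis .
  qed
  moreover have "(\<lambda>s. s * (s - c)^m / F) = ec \<alpha> \<alpha> (Suc m)"
    by (rule ext) (simp add: ec_eq c_def F_def)
  ultimately show ?thesis by simp
qed

lemma case_eq:
  fixes L :: "complex fps"
  assumes L0: "fps_nth L 0 = 0" and LE: "L * ExL L \<alpha> = fps_X"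
  shows "\<forall>s. fps_nth (ExL L s) n = ec \<alpha> \<alpha> n s"
proof (induction n)
  case 0
  then show ?case by (simp add: ExL_nth0 ec_def)
next
  case (Suc m)
  have Lx: "L = fps_X * ExL L (-\<alpha>)"
  proof -
    have "ExL L \<alpha> * ExL L (-\<alpha>) = 1" using ExL_add[OF L0, of \<alpha> "-\<alpha>"] by (simp add: ExL_0)
    then have "L = L * ExL L \<alpha> * ExL L (-\<alpha>)" by (simp add: mult.assoc)
    then show ?thesis unfolding LE .
  qed
  have LEs: "fps_nth (L * ExL L s) (Suc m) = fps_nth (ExL L (s - \<alpha>)) m" for s
  proof -
    have "L * ExL L s = fps_X * ExL L (s - \<alpha>)"
      using ExL_add[OF L0, of "-\<alpha>" s] by (subst Lx) (simp add: mult.assoc)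
    then show ?thesis by simp
  qed
  define d where "d s = fps_nth (ExL L s) (Suc m) - ec \<alpha> \<alpha> (Suc m) s" for s
  have "(d has_field_derivative 0) (at s within UNIV)" for s
  proof -
    have "(d has_field_derivative (fps_nth (L * ExL L s) (Suc m) - ec \<alpha> \<alpha> m (s - \<alpha>))) (at s)"
      unfolding d_def by (intro derivative_intros ExL_deriv_s[OF L0] ec_deriv)
    then show ?thesis using Suc.IH by (simp add: LEs)
  qed
  then obtain c where "\<forall>x\<in>UNIV. d x = c"
    using has_field_derivative_zero_constant[of UNIV d] by auto
  moreover have "d 0 = 0" by (simp add: d_def ExL_0 ec_0)
  ultimately have "d s = 0" for s by auto
  then show ?case by (simp add: d_def)
qed

lemma Ln_eq:
  fixes L :: "complex fps"
  assumes L0: "fps_nth L 0 = 0" and LE: "L * ExL L \<alpha> = fps_X" and n: "1 \<le> n"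
  shows "fps_nth L n = 1 / fact n * (\<Prod>j=1..n-1. - (of_nat j * \<alpha> + of_nat (n-j) * \<alpha>))"
proof -
  obtain m where nm: "n = Suc m" using n by (cases n) auto
  have Lx: "L = fps_X * ExL L (-\<alpha>)"
  proof -
    have "ExL L \<alpha> * ExL L (-\<alpha>) = 1" using ExL_add[OF L0, of \<alpha> "-\<alpha>"] by (simp add: ExL_0)
    then have "L = L * ExL L \<alpha> * ExL L (-\<alpha>)" by (simp add: mult.assoc)
    then show ?thesis unfolding LE .
  qed
  have "fps_nth L n = ec \<alpha> \<alpha> m (-\<alpha>)"
    using case_eq[OF L0 LE, of m] by (subst Lx) (simp add: nm)
  also have "\<dots> = 1 / fact n * (- (of_nat n * \<alpha>))^(n-1)"
  proof (cases m)
    case 0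
    then show ?thesis by (simp add: ec_def nm)
  next
    case (Suc k)
    have f: "(fact (Suc (Suc k)) :: complex) = of_nat (Suc (Suc k)) * fact (Suc k)"
      by (rule fact_Suc)
    define N where "N = (of_nat (Suc (Suc k)) :: complex)"
    define Y where "Y = (- (N * \<alpha>))^k"
    have "ec \<alpha> \<alpha> m (-\<alpha>) = - \<alpha> / fact (Suc k) * Y"
      unfolding Suc ec_eq Y_def N_def by (simp add: algebra_simps)
    also have "\<dots> = 1 / (N * fact (Suc k)) * (- (N * \<alpha>) * Y)"
      by (rule helper3[symmetric]) (unfold N_def, rule of_nat_neq_0)
    also have "\<dots> = 1 / fact n * (- (of_nat n * \<alpha>))^(n-1)"
      unfolding nm Suc f N_def Y_def by simp
    finally show ?thesis .
  qed
  finally have main: "fps_nth L n = 1 / fact n * (- (of_nat n * \<alpha>))^(n-1)" .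
  have pr: "(\<Prod>j=1..n-1. - (of_nat j * \<alpha> + of_nat (n-j) * \<alpha>)) = (- (of_nat n * \<alpha>))^(n-1)"
  proof -
    have "(\<Prod>j=1..n-1. - (of_nat j * \<alpha> + of_nat (n-j) * \<alpha>)) = (\<Prod>j=1..n-1. - (of_nat n * \<alpha>))"
    proof (intro prod.cong refl)
      fix j assume "j \<in> {1..n-1}"
      then have "j + (n - j) = n" by auto
      then have "of_nat j + of_nat (n - j) = (of_nat n :: complex)"
        by (metis of_nat_add)
      then show "- (of_nat j * \<alpha> + of_nat (n-j) * \<alpha>) = - (of_nat n * \<alpha>)"
        by (simp add: distrib_right[symmetric])
    qed
    then show ?thesis by simp
  qed
  show ?thesis using main pr by simp
qed

lemma prod_split_pairs:
  fixes h :: "nat \<Rightarrow> 'a::comm_monoid_mult"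
  assumes n: "2 \<le> n"
  shows "(\<Prod>j=1..n-1. h j) = (\<Prod>j\<in>{j. 1 \<le> j \<and> 2*j < n}. h j * h (n - j)) *
           (if even n then h (n div 2) else 1)"
proof -
  define A where "A = {j. 1 \<le> j \<and> 2*j < n}"
  define B where "B = {j. j \<le> n - 1 \<and> n < 2*j}"
  define M where "M = {j. 1 \<le> j \<and> 2*j = n}"
  have fA: "finite A" unfolding A_def by (rule finite_subset[of _ "{..n}"]) auto
  have fB: "finite B" unfolding B_def by (rule finite_subset[of _ "{..n}"]) auto
  have fM: "finite M" unfolding M_def by (rule finite_subset[of _ "{..n}"]) auto
  have U: "{1..n-1} = A \<union> B \<union> M" unfolding A_def B_def M_def using n by auto
  have d1: "A \<inter> B = {}" unfolding A_def B_def by auto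
  have d2: "(A \<union> B) \<inter> M = {}" unfolding A_def B_def M_def by auto
  have Bimg: "B = (\<lambda>j. n - j) ` A"
  proof
    show "B \<subseteq> (\<lambda>j. n - j) ` A"
    proof
      fix k assume k: "k \<in> B"
      then have "n - k \<in> A" "k = n - (n - k)" unfolding A_def B_def using n by auto
      then show "k \<in> (\<lambda>j. n - j) ` A" by blast
    qed
    show "(\<lambda>j. n - j) ` A \<subseteq> B" unfolding A_def B_def by auto
  qed
  have inj: "inj_on (\<lambda>j. n - j) A" unfolding A_def inj_on_def by auto
  have pB: "prod h B = (\<Prod>j\<in>A. h (n - j))"
    unfolding Bimg by (subst prod.reindex[OF inj]) simp
  have pM: "prod h M = (if even n then h (n div 2) else 1)"
  proof (cases "even n")
    case True
    then have "M = {n div 2}" unfolding M_def using n by auto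
    then show ?thesis using True by simp
  next
    case False
    then have "M = {}" unfolding M_def by auto
    then show ?thesis using False by simp
  qed
  have "(\<Prod>j=1..n-1. h j) = prod h A * prod h B * prod h M"
    unfolding U using fA fB fM d1 d2 by (simp add: prod.union_disjoint)
  also have "\<dots> = (\<Prod>j\<in>A. h j * h (n - j)) * (if even n then h (n div 2) else 1)"
    unfolding pB pM by (simp add: prod.distrib)
  finally show ?thesis unfolding A_def .
qed

lemma prod_pairs_eq:
  fixes f g :: "nat \<Rightarrow> 'a::comm_monoid_mult"
  assumes n: "2 \<le> n"
    and p: "\<And>j. 1 \<le> j \<Longrightarrow> 2*j < n \<Longrightarrow> f j * f (n - j) = g j * g (n - j)"
    and m: "even n \<Longrightarrow> f (n div 2) = g (n div 2)"
  shows "(\<Prod>j=1..n-1. f j) = (\<Prod>j=1..n-1. g j)"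
  unfolding prod_split_pairs[OF n, of f] prod_split_pairs[OF n, of g]
  using p m by (auto intro!: prod.cong)

lemma pair_identity:
  fixes \<alpha> \<beta> a1 a2 :: complex and j k :: nat
  assumes j: "1 \<le> j" and k: "1 \<le> k" and s: "\<alpha> + \<beta> = a1" and p: "\<alpha> * \<beta> = - (2 * a2)"
  shows "(of_real ((real k - real j) / sqrt (real j * real k)) * csqrt (2 * a2) - a1) *
         (of_real ((real j - real k) / sqrt (real k * real j)) * csqrt (2 * a2) - a1) =
         (- (of_nat j * \<alpha> + of_nat k * \<beta>) / of_nat j) * (- (of_nat k * \<alpha> + of_nat j * \<beta>) / of_nat k)"
proof -
  define x where "x = real j"
  define y where "y = real k"
  have x0: "x > 0" "y > 0" using j k by (auto simp: x_def y_def)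
  define C where "C = (of_real ((y - x) / sqrt (x * y)) :: complex)"
  have r: "((y - x) / sqrt (x * y))^2 = (y - x)^2 / (x * y)"
    using x0 by (simp add: power_divide)
  have C2: "C^2 = of_real ((y - x)^2 / (x * y))"
    unfolding C_def of_real_power[symmetric] r ..
  have rn: "(x - y) / sqrt (y * x) = - ((y - x) / sqrt (x * y))"
    using x0 by (simp add: mult.commute[of y x] divide_simps)
  have Cn: "of_real ((x - y) / sqrt (y * x)) = - C"
    unfolding rn C_def by (rule of_real_minus)
  define X where "X = (of_nat j :: complex)"
  define Y where "Y = (of_nat k :: complex)"
  have X0: "X \<noteq> 0" "Y \<noteq> 0" using j k by (auto simp: X_def Y_def)
  have oX: "of_real ((y - x)^2 / (x * y)) = (Y - X)^2 / (X * Y)"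
    by (simp add: x_def y_def X_def Y_def)
  have "(C * csqrt (2 * a2) - a1) * (- C * csqrt (2 * a2) - a1) = a1^2 - C^2 * (csqrt (2 * a2))^2"
    by (simp add: algebra_simps power2_eq_square)
  also have "\<dots> = a1^2 - (Y - X)^2 / (X * Y) * (2 * a2)"
    unfolding C2 oX by simp
  also have "\<dots> = (- (X * \<alpha> + Y * \<beta>) / X) * (- (Y * \<alpha> + X * \<beta>) / Y)"
  proof -
    have a2e: "2 * a2 = - (\<alpha> * \<beta>)" using p by simp
    show ?thesis using X0 unfolding s[symmetric] a2e
      by (simp add: field_simps power2_eq_square)
  qed
  finally show ?thesis
    unfolding C_def[symmetric] Cn[unfolded x_def y_def]
    by (simp add: C_def x_def y_def X_def Y_def)
qed

lemma final_conv:
  fixes \<alpha> \<beta> a1 a2 :: complex and n :: nat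
  assumes n: "2 \<le> n" and s: "\<alpha> + \<beta> = a1" and p: "\<alpha> * \<beta> = - (2 * a2)"
  shows "1 / fact n * (\<Prod>j=1..n-1. - (of_nat j * \<alpha> + of_nat (n-j) * \<beta>)) =
    (1 / of_nat n) * (\<Prod>j = 1..n - 1.
       (of_real ((real n - 2 * real j) / sqrt (real j * (real n - real j)))) * csqrt (2 * a2) - a1)"
proof -
  define f where "f j = (of_real ((real n - 2 * real j) / sqrt (real j * (real n - real j)))) * csqrt (2 * a2) - a1" for j
  define g where "g j = - (of_nat j * \<alpha> + of_nat (n-j) * \<beta>) / (of_nat j :: complex)" for j
  have fg: "(\<Prod>j=1..n-1. f j) = (\<Prod>j=1..n-1. g j)"
  proof (rule prod_pairs_eq[OF n])
    fix j assume j: "1 \<le> j" "2 * j < n"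
    define k where "k = n - j"
    have k: "1 \<le> k" "n - k = j" "n = j + k" using j by (auto simp: k_def)
    have r1: "real n - 2 * real j = real k - real j" "real n - real j = real k"
      "real n - 2 * real k = real j - real k" "real n - real k = real j"
      using k by auto
    show "f j * f (n - j) = g j * g (n - j)"
      unfolding k_def[symmetric] f_def g_def r1 k(2)
      using pair_identity[OF j(1) k(1) s p] by simp
  next
    assume "even n"
    then obtain k where k: "n = 2 * k" by auto
    have k1: "1 \<le> k" using n k by auto
    have "f (n div 2) = - a1" by (simp add: f_def k)
    also have "\<dots> = g (n div 2)" using k1 by (simp add: g_def k s[symmetric] field_simps)
    finally show "f (n div 2) = g (n div 2)" .
  qed
  have "(\<Prod>j=1..n-1. g j) = (\<Prod>j=1..n-1. - (of_nat j * \<alpha> + of_nat (n-j) * \<beta>)) / (\<Prod>j=1..n-1. (of_nat j :: complex))"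
    unfolding g_def by (rule prod_dividef)
  also have "(\<Prod>j=1..n-1. (of_nat j :: complex)) = fact (n - 1)"
    by (simp add: fact_prod)
  finally have pg: "(\<Prod>j=1..n-1. g j) = (\<Prod>j=1..n-1. - (of_nat j * \<alpha> + of_nat (n-j) * \<beta>)) / fact (n - 1)" .
  have fn: "(fact n :: complex) = of_nat n * fact (n - 1)" using n by (simp add: fact_reduce)
  have "(1 / of_nat n) * (\<Prod>j=1..n-1. f j) = 1 / fact n * (\<Prod>j=1..n-1. - (of_nat j * \<alpha> + of_nat (n-j) * \<beta>))"
    unfolding fg pg fn by simp
  then show ?thesis unfolding f_def by simp
qed

lemma log_formula:
  fixes a :: "nat \<Rightarrow> complex" and n :: nat
  assumes as: "abel_assoc a" and n: "n \<ge> 2"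
  shows "fps_nth (abel_log a) n =
    (1 / of_nat n) * (\<Prod>j = 1..n - 1.
       (of_real ((real n - 2 * real j) / sqrt (real j * (real n - real j)))) * csqrt (2 * a 2) - a 1)"
proof -
  define P where "P = Pser a"
  define L where "L = abel_log a"
  have LP': "L = fps_integral (inverse P) 0" by (simp add: L_def P_def abel_log_def Pser_def)
  have P0: "fps_nth P 0 = 1" and P1: "fps_nth P 1 = a 1" by (simp_all add: P_def Pser_def)
  have L0: "fps_nth L 0 = 0" by (simp add: LP')
  have LP: "fps_deriv L * P = 1" using P0 by (simp add: LP' fps_deriv_fps_integral inverse_mult_eq_1)
  have o1: "P * fps_deriv P = fps_const (a 1) * P + fps_const (2 * a 2) * fps_X"
    using ode1[OF ode2[OF as, folded P_def] P0 P1] .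
  define \<delta> where "\<delta> = csqrt ((a 1)^2 + 8 * a 2)"
  define \<alpha> where "\<alpha> = (a 1 + \<delta>) / 2"
  define \<beta> where "\<beta> = (a 1 - \<delta>) / 2"
  have s: "\<alpha> + \<beta> = a 1" by (simp add: \<alpha>_def \<beta>_def field_simps)
  have p: "\<alpha> * \<beta> = - (2 * a 2)"
  proof -
    have "\<alpha> * \<beta> = ((a 1)^2 - \<delta>^2) / 4" by (simp add: \<alpha>_def \<beta>_def field_simps power2_eq_square)
    also have "\<delta>^2 = (a 1)^2 + 8 * a 2" by (simp add: \<delta>_def)
    finally show ?thesis by simp
  qed
  have o1a: "P * fps_deriv P = fps_const (\<alpha> + \<beta>) * P - fps_const (\<alpha> * \<beta>) * fps_X"
    unfolding o1 s p by (simp flip: fps_const_neg)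
  have o1b: "P * fps_deriv P = fps_const (\<beta> + \<alpha>) * P - fps_const (\<beta> * \<alpha>) * fps_X"
    using o1a by (simp add: add.commute mult.commute)
  have Ea: "ExL L \<alpha> = P - fps_const \<beta> * fps_X" by (rule ExL_sols[OF L0 LP o1a P0])
  have Eb: "ExL L \<beta> = P - fps_const \<alpha> * fps_X" by (rule ExL_sols[OF L0 LP o1b P0])
  have n1: "1 \<le> n" using n by simp
  have Ln: "fps_nth L n = 1 / fact n * (\<Prod>j=1..n-1. - (of_nat j * \<alpha> + of_nat (n-j) * \<beta>))"
  proof (cases "\<alpha> = \<beta>")
    case True
    have "L * ExL L \<alpha> = fps_X" by (rule L_eq_case[OF L0 LP]) (use Ea True in simp)
    from Ln_eq[OF L0 this n1] show ?thesis using True by simp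
  next
    case False
    have D: "ExL L \<alpha> - ExL L \<beta> = fps_const (\<alpha> - \<beta>) * fps_X"
      unfolding Ea Eb by (rule fps_ext) (simp add: algebra_simps)
    show ?thesis by (rule Ln_ne[OF L0 D False n1])
  qed
  show ?thesis unfolding L_def[symmetric] Ln by (rule final_conv[OF n s p])
qed

theorem proposition4p1:
  fixes a :: "nat \<Rightarrow> complex" and n :: nat
  assumes "abel_assoc a"
    and "n \<ge> 2"
  shows "fps_nth (abel_log a) n =
    (1 / of_nat n) * (\<Prod>j = 1..n - 1.
       (of_real ((real n - 2 * real j) / sqrt (real j * (real n - real j)))) * csqrt (2 * a 2) - a 1)"
  using log_formula[OF assms] .

end
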